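(* Let $f:\mathrm{I}\to\mathbb{R}$ be a convex function on an interval $\mathrm{I}\subseteq\mathbb{R}$, let $\Gamma\subseteq\mathcal{M}_b(\mathcal{H})$, and let $\P\in\mathcal{P}(\mathcal{H})$ be a fixed distribution (not depending on the sample). Let $\delta\in[0,1]$ and, for every sample $\mathcal{S}\in\mathcal{Z}^m$, let $\phi_{\mathcal{S}}\in\Gamma$. Then with probability at least $1-\delta$ over $\mathcal{S}\sim\mathcal{D}^m$, for all $\rho\in\mathcal{P}(\mathcal{H})$, \[ \mathbb{E}_{h\sim\rho}\phi_{\mathcal{S}}(h)\le D^{\Gamma}_{f}(\rho\|\P)+\ln\frac{1}{\delta}+\ln\Big[\mathbb{E}_{\mathcal{S}\sim\mathcal{D}^m}\exp\big(\Lambda^{\P}_{f}(\phi_{\mathcal{S}})\big)\Big]. \]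
   Context: $\mathcal{H}$ is a hypothesis space, $\mathcal{Z}$ a data space, $\mathcal{D}$ an unknown distribution on $\mathcal{Z}$, and $\mathcal{S}=\{z_1,\dots,z_m\}\sim\mathcal{D}^m$ an i.i.d. sample. $\mathcal{P}(\mathcal{H})$ is the set of probability distributions on $\mathcal{H}$ and $\mathcal{M}_b(\mathcal{H})$ the set of bounded measurable functions $\mathcal{H}\to\mathbb{R}$. $f^*(y)=\sup_{x\in\mathrm{I}}\{xy-f(x)\}$ is the Legendre transform of $f$. For $\varphi\in\mathcal{M}_b(\mathcal{H})$, $\Lambda^{\P}_{f}(\varphi):=\inf_{c\in\mathbb{R}}\{c+\mathbb{E}_{h\sim\P}f^*(\varphi(h)-c)\}$. The $(f,\Gamma)$-divergence is $D^{\Gamma}_f(\rho\|\P):=\sup_{\varphi\in\Gamma}\{\mathbb{E}_{h\sim\rho}\varphi(h)-\Lambda^{\P}_f(\varphi)\}$. *)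

theory Defs
  imports "HOL-Probability.Probability"
begin

definition legendre :: "(real \<Rightarrow> real) \<Rightarrow> real set \<Rightarrow> real \<Rightarrow> ereal" where
  "legendre f I y = (SUP x\<in>I. ereal (x * y - f x))"

definition eexpect :: "'a measure \<Rightarrow> ('a \<Rightarrow> ereal) \<Rightarrow> ereal" where
  "eexpect M X = enn2ereal (\<integral>\<^sup>+ x. e2ennreal (X x) \<partial>M) - enn2ereal (\<integral>\<^sup>+ x. e2ennreal (- X x) \<partial>M)"

definition bounded_measurable :: "'h measure \<Rightarrow> ('h \<Rightarrow> real) set" where
  "bounded_measurable M = {\<phi>. \<phi> \<in> borel_measurable M \<and> (\<exists>B. \<forall>h\<in>space M. \<bar>\<phi> h\<bar> \<le> B)}"

definition Lambda_f :: "(real \<Rightarrow> real) \<Rightarrow> real set \<Rightarrow> 'h measure \<Rightarrow> ('h \<Rightarrow> real) \<Rightarrow> ereal" where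
  "Lambda_f f I P \<phi> = (INF c\<in>UNIV. ereal c + eexpect P (\<lambda>h. legendre f I (\<phi> h - c)))"

definition fGamma_div :: "(real \<Rightarrow> real) \<Rightarrow> real set \<Rightarrow> ('h \<Rightarrow> real) set \<Rightarrow> 'h measure \<Rightarrow> 'h measure \<Rightarrow> ereal" where
  "fGamma_div f I \<Gamma> \<rho> P = (SUP \<phi>\<in>\<Gamma>. ereal (\<integral>h. \<phi> h \<partial>\<rho>) - Lambda_f f I P \<phi>)"

definition eln :: "ereal \<Rightarrow> ereal" where
  "eln x = (if x \<le> 0 then - \<infinity> else if x = \<infinity> then \<infinity> else ereal (ln (real_of_ereal x)))"

definition eexp :: "ereal \<Rightarrow> ennreal" where
  "eexp x = (if x = \<infinity> then \<infinity> else if x = - \<infinity> then 0 else ennreal (exp (real_of_ereal x)))"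

end

theory Submission imports Defs begin

lemma eexp_meas[measurable]: "eexp \<in> borel_measurable borel"
  unfolding eexp_def by measurable

lemma key_ineq:
  fixes E :: real and Dv L a b :: ereal
  assumes "ereal E - L \<le> Dv" "L \<le> a + b" "a \<noteq> -\<infinity>"
  shows "ereal E \<le> Dv + a + b"
  using assms
  apply (cases L; cases a; cases b; cases Dv)
  apply auto
  done

lemma eln_delta: "0 < d \<Longrightarrow> - eln (ereal d) = ereal (- ln d)"
  by (simp add: eln_def)

lemma eln_neq: "- eln (ereal d) \<noteq> -\<infinity>"
  by (simp add: eln_def)

theorem theorem3p1:
  fixes f :: "real \<Rightarrow> real" and I :: "real set"
    and \<Gamma> :: "('h \<Rightarrow> real) set" and P :: "'h measure"
    and D :: "'z measure" and m :: nat and \<delta> :: real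
    and \<phi> :: "(nat \<Rightarrow> 'z) \<Rightarrow> 'h \<Rightarrow> real"
  assumes "is_interval I" and "convex_on I f"
    and "\<Gamma> \<subseteq> bounded_measurable P"
    and "prob_space P"
    and "prob_space D"
    and "0 \<le> \<delta>" and "\<delta> \<le> 1"
    and "\<forall>S\<in>space (PiM {..<m} (\<lambda>_. D)). \<phi> S \<in> \<Gamma>"
    and "(\<lambda>S. Lambda_f f I P (\<phi> S)) \<in> borel_measurable (PiM {..<m} (\<lambda>_. D))"
  shows "\<exists>A\<in>sets (PiM {..<m} (\<lambda>_. D)).
           measure (PiM {..<m} (\<lambda>_. D)) A \<ge> 1 - \<delta> \<and>
           (\<forall>S\<in>A. \<forall>\<rho>. prob_space \<rho> \<and> sets \<rho> = sets P \<longrightarrow>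
              ereal (\<integral>h. \<phi> S h \<partial>\<rho>)
                \<le> fGamma_div f I \<Gamma> \<rho> P + (- eln (ereal \<delta>))
                   + eln (enn2ereal (\<integral>\<^sup>+ S'. eexp (Lambda_f f I P (\<phi> S')) \<partial>(PiM {..<m} (\<lambda>_. D)))))"
proof -
  define M where "M = PiM {..<m} (\<lambda>_. D)"
  define L where "L = (\<lambda>S. Lambda_f f I P (\<phi> S))"
  define Z where "Z = (\<integral>\<^sup>+ S'. eexp (L S') \<partial>M)"
  define t where "t = - eln (ereal \<delta>) + eln (enn2ereal Z)"
  define A where "A = {S\<in>space M. L S \<le> t}"
  have Lm[measurable]: "L \<in> borel_measurable M" using assms(9) unfolding L_def M_def .
  interpret M: prob_space M unfolding M_def by (intro prob_space_PiM assms(5))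
  have Asets: "A \<in> sets M" unfolding A_def by measurable
  have um: "(\<lambda>x. eexp (L x)) \<in> borel_measurable M" by measurable
  have compl: "space M - A = {S\<in>space M. t < L S}" unfolding A_def by auto
  have em: "emeasure M (space M - A) \<le> ennreal \<delta>"
  proof (cases "\<delta> = 0 \<or> Z = \<infinity>")
    case True
    then have "t = \<infinity>" unfolding t_def by (auto simp: eln_def)
    then show ?thesis unfolding compl by simp
  next
    case False
    then have d: "0 < \<delta>" and Zf: "Z < \<infinity>" using assms(6) by (auto simp: top.not_eq_extremum)
    have Mk: "emeasure M {x\<in>space M. 1 \<le> c * eexp (L x)} \<le> c * Z" for c
    proof -
      have "emeasure M {x\<in>space M. 1 \<le> c * eexp (L x)} \<le> c * (\<integral>\<^sup>+ x. eexp (L x) * indicator (space M) x \<partial>M)"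
        by (rule nn_integral_Markov_inequality) (use um in auto)
      also have "(\<integral>\<^sup>+ x. eexp (L x) * indicator (space M) x \<partial>M) = Z"
        unfolding Z_def by (rule nn_integral_cong) auto
      finally show ?thesis .
    qed
    have sm: "{x\<in>space M. 1 \<le> c * eexp (L x)} \<in> sets M" for c by measurable
    show ?thesis
    proof (cases "Z = 0")
      case True
      then have "t = -\<infinity>" unfolding t_def using d by (simp add: eln_def zero_ennreal.rep_eq)
      have "space M - A \<subseteq> {x\<in>space M. 1 \<le> top * eexp (L x)}"
        unfolding compl \<open>t = -\<infinity>\<close> by (auto simp: ennreal_top_mult eexp_def split: if_splits)
      then have "emeasure M (space M - A) \<le> top * Z"
        by (intro order_trans[OF emeasure_mono Mk] sm)
      then show ?thesis using True by simp
    next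
      case False
      obtain z where z0: "Z = ennreal z" "0 \<le> z" using Zf by (cases Z) auto
      have z: "Z = ennreal z" "0 < z" using z0 False by auto
      have t: "t = ereal (ln z - ln \<delta>)" unfolding t_def using z d
        by (simp add: eln_def enn2ereal_ennreal)
      have "space M - A \<subseteq> {x\<in>space M. 1 \<le> ennreal (\<delta>/z) * eexp (L x)}"
      proof
        fix x assume "x \<in> space M - A"
        then have x: "x \<in> space M" "ereal (ln z - ln \<delta>) < L x" unfolding compl t by auto
        show "x \<in> {x\<in>space M. 1 \<le> ennreal (\<delta>/z) * eexp (L x)}"
        proof (cases "L x")
          case (real l)
          then have "ln z - ln \<delta> < l" using x by auto
          then have "exp (ln z - ln \<delta>) < exp l" by simp
          moreover have "exp (ln z - ln \<delta>) = z / \<delta>" using z d by (simp add: exp_diff)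
          ultimately have "z / \<delta> < exp l" by simp
          then have "1 \<le> \<delta>/z * exp l" using z d by (simp add: field_simps)
          then have "1 \<le> ennreal (\<delta>/z * exp l)" by (metis ennreal_1 ennreal_leI)
          also have "ennreal (\<delta>/z * exp l) = ennreal (\<delta>/z) * eexp (L x)"
            using real z d by (simp add: eexp_def ennreal_mult[symmetric] del: times_divide_eq_left)
          finally show ?thesis using x by simp
        next
          case PInf
          then show ?thesis using x z d by (simp add: eexp_def ennreal_mult_top)
        next
          case MInf
          then show ?thesis using x by auto
        qed
      qed
      then have "emeasure M (space M - A) \<le> ennreal (\<delta>/z) * Z"
        by (intro order_trans[OF emeasure_mono Mk] sm)
      also have "\<dots> = ennreal \<delta>" using z d by (simp flip: ennreal_mult)
      finally show ?thesis .
    qed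
  qed
  have "measure M (space M - A) \<le> \<delta>"
    using em assms(6) by (simp add: M.emeasure_eq_measure)
  then have mA: "measure M A \<ge> 1 - \<delta>"
    using M.prob_compl[OF Asets] by simp
  have pt: "ereal (\<integral>h. \<phi> S h \<partial>\<rho>) \<le> fGamma_div f I \<Gamma> \<rho> P + (- eln (ereal \<delta>)) + eln (enn2ereal Z)"
    if "S \<in> A" for S and \<rho> :: "'h measure"
  proof (rule key_ineq)
    have "\<phi> S \<in> \<Gamma>" using that assms(8) unfolding A_def M_def by auto
    then show "ereal (\<integral>h. \<phi> S h \<partial>\<rho>) - L S \<le> fGamma_div f I \<Gamma> \<rho> P"
      unfolding fGamma_div_def L_def by (rule SUP_upper2) simp
    show "L S \<le> - eln (ereal \<delta>) + eln (enn2ereal Z)" using that unfolding A_def t_def by auto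
    show "- eln (ereal \<delta>) \<noteq> -\<infinity>" by (rule eln_neq)
  qed
  show ?thesis
    using Asets mA pt unfolding M_def[symmetric] Z_def L_def by blast
qed

end
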